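(* Let $\boldsymbol x^*$ be a pure Nash equilibrium of $\mathcal L(n,S)$ that satisfies the vertex property. Then for every point $w\in S$, \[ \operatorname{card}\{i\in N: x_i^*=w\}\le \operatorname{degree}(w). \]
   Context: Network: $(V,E)$ is a finite connected graph with no vertex of degree $2$; each edge $e$ has a length $\lambda(e)>0$. $S$ is the metric measure space obtained by identifying each edge with a segment of length $\lambda(e)$, with length measure $\lambda$ and shortest-path distance $d$. For $v\in V$, $\operatorname{degree}(v)$ is its graph degree. For a point $x\in S\setminus V$ (interior of an edge), $\operatorname{degree}(x)=2$. Location game $\mathcal L(n,S)$ with player set $N=\{1,\dots,n\}$: each player chooses a point of $S$. Consumers are distributed according to $\lambda$, and each shops at a closest occupied location. Consumers equidistant from several closest occupied locations are split equally among those locations, and the share of a location is split equally among the players located there. A player's payoff is the mass of consumers she attracts. Nash equilibria are pure. A profile satisfies the vertex property if every vertex of degree $\ge3$ is occupied by at least one player. *)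

theory Defs
  imports "HOL-Analysis.Analysis"
begin

text \<open>A network is given by a finite vertex set V, a set E of edges, each edge
stored once with an arbitrary orientation as a pair (u,v) with u ~= v, and a
length function lam on edges.  Points of the metric space S are either vertices
or interior points of edges: Mid (u,v) t is the point on edge (u,v) at
distance t from u, with 0 < t < lam (u,v).\<close>

datatype 'v pt = Vtx 'v | Mid "'v \<times> 'v" real

definition adj :: "('v \<times> 'v) set \<Rightarrow> 'v \<Rightarrow> 'v \<Rightarrow> bool" where
  "adj E u v \<longleftrightarrow> (u, v) \<in> E \<or> (v, u) \<in> E"

definition elen :: "('v \<times> 'v) set \<Rightarrow> ('v \<times> 'v \<Rightarrow> real) \<Rightarrow> 'v \<Rightarrow> 'v \<Rightarrow> real" where
  "elen E lam u v = (if (u, v) \<in> E then lam (u, v) else lam (v, u))"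

definition is_walk :: "('v \<times> 'v) set \<Rightarrow> 'v list \<Rightarrow> bool" where
  "is_walk E ws \<longleftrightarrow> ws \<noteq> [] \<and> (\<forall>i. Suc i < length ws \<longrightarrow> adj E (ws ! i) (ws ! Suc i))"

definition walk_len :: "('v \<times> 'v) set \<Rightarrow> ('v \<times> 'v \<Rightarrow> real) \<Rightarrow> 'v list \<Rightarrow> real" where
  "walk_len E lam ws = (\<Sum>i<length ws - 1. elen E lam (ws ! i) (ws ! Suc i))"

definition dV :: "('v \<times> 'v) set \<Rightarrow> ('v \<times> 'v \<Rightarrow> real) \<Rightarrow> 'v \<Rightarrow> 'v \<Rightarrow> real" where
  "dV E lam u v = Inf {walk_len E lam ws | ws. is_walk E ws \<and> hd ws = u \<and> last ws = v}"

definition network :: "'v set \<Rightarrow> ('v \<times> 'v) set \<Rightarrow> ('v \<times> 'v \<Rightarrow> real) \<Rightarrow> bool" where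
  "network V E lam \<longleftrightarrow>
     finite V \<and> E \<subseteq> V \<times> V \<and> E \<noteq> {} \<and>
     (\<forall>u v. (u, v) \<in> E \<longrightarrow> u \<noteq> v \<and> (v, u) \<notin> E) \<and>
     (\<forall>e\<in>E. lam e > 0) \<and>
     (\<forall>u\<in>V. \<forall>v\<in>V. \<exists>ws. is_walk E ws \<and> hd ws = u \<and> last ws = v)"

definition vdeg :: "('v \<times> 'v) set \<Rightarrow> 'v \<Rightarrow> nat" where
  "vdeg E v = card {e \<in> E. fst e = v \<or> snd e = v}"

fun pdeg :: "('v \<times> 'v) set \<Rightarrow> 'v pt \<Rightarrow> nat" where
  "pdeg E (Vtx v) = vdeg E v"
| "pdeg E (Mid e t) = 2"

definition points :: "'v set \<Rightarrow> ('v \<times> 'v) set \<Rightarrow> ('v \<times> 'v \<Rightarrow> real) \<Rightarrow> 'v pt set" where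
  "points V E lam = Vtx ` V \<union> {Mid e t | e t. e \<in> E \<and> 0 < t \<and> t < lam e}"

fun ends :: "('v \<times> 'v \<Rightarrow> real) \<Rightarrow> 'v pt \<Rightarrow> ('v \<times> real) set" where
  "ends lam (Vtx v) = {(v, 0)}"
| "ends lam (Mid (a, b) t) = {(a, t), (b, lam (a, b) - t)}"

definition dvia :: "('v \<times> 'v) set \<Rightarrow> ('v \<times> 'v \<Rightarrow> real) \<Rightarrow> 'v pt \<Rightarrow> 'v pt \<Rightarrow> real" where
  "dvia E lam p q = Min {s + dV E lam a b + r | a s b r. (a, s) \<in> ends lam p \<and> (b, r) \<in> ends lam q}"

text \<open>Shortest-path distance on S: a shortest path either stays inside a common
edge, or leaves the edge of each point through one of its endpoints.\<close>
fun pdist :: "('v \<times> 'v) set \<Rightarrow> ('v \<times> 'v \<Rightarrow> real) \<Rightarrow> 'v pt \<Rightarrow> 'v pt \<Rightarrow> real" where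
  "pdist E lam (Mid e t) (Mid e' t') =
     (if e = e' then min \<bar>t - t'\<bar> (dvia E lam (Mid e t) (Mid e' t'))
      else dvia E lam (Mid e t) (Mid e' t'))"
| "pdist E lam p q = dvia E lam p q"

text \<open>Profiles: x :: nat => 'v pt, players are 1..n.\<close>

definition occupied :: "nat \<Rightarrow> (nat \<Rightarrow> 'v pt) \<Rightarrow> 'v pt set" where
  "occupied n x = x ` {1..n}"

definition closest ::
  "('v \<times> 'v) set \<Rightarrow> ('v \<times> 'v \<Rightarrow> real) \<Rightarrow> nat \<Rightarrow> (nat \<Rightarrow> 'v pt) \<Rightarrow> 'v pt \<Rightarrow> 'v pt set" where
  "closest E lam n x y =
     {z \<in> occupied n x. \<forall>z'\<in>occupied n x. pdist E lam y z \<le> pdist E lam y z'}"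

definition share ::
  "('v \<times> 'v) set \<Rightarrow> ('v \<times> 'v \<Rightarrow> real) \<Rightarrow> nat \<Rightarrow> (nat \<Rightarrow> 'v pt) \<Rightarrow> nat \<Rightarrow> 'v pt \<Rightarrow> real" where
  "share E lam n x i y =
     (if x i \<in> closest E lam n x y
      then 1 / (real (card (closest E lam n x y)) * real (card {j \<in> {1..n}. x j = x i}))
      else 0)"

text \<open>Payoff: integral of the share against the length measure (vertices are
null sets, so only edge interiors contribute).\<close>
definition payoff ::
  "('v \<times> 'v) set \<Rightarrow> ('v \<times> 'v \<Rightarrow> real) \<Rightarrow> nat \<Rightarrow> (nat \<Rightarrow> 'v pt) \<Rightarrow> nat \<Rightarrow> real" where
  "payoff E lam n x i =
     (\<Sum>e\<in>E. LINT t:{0<..<lam e}|lborel. share E lam n x i (Mid e t))"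

definition profile :: "'v set \<Rightarrow> ('v \<times> 'v) set \<Rightarrow> ('v \<times> 'v \<Rightarrow> real) \<Rightarrow> nat \<Rightarrow> (nat \<Rightarrow> 'v pt) \<Rightarrow> bool" where
  "profile V E lam n x \<longleftrightarrow> (\<forall>i\<in>{1..n}. x i \<in> points V E lam)"

definition nash_eq :: "'v set \<Rightarrow> ('v \<times> 'v) set \<Rightarrow> ('v \<times> 'v \<Rightarrow> real) \<Rightarrow> nat \<Rightarrow> (nat \<Rightarrow> 'v pt) \<Rightarrow> bool" where
  "nash_eq V E lam n x \<longleftrightarrow> profile V E lam n x \<and>
     (\<forall>i\<in>{1..n}. \<forall>y\<in>points V E lam. payoff E lam n (x(i := y)) i \<le> payoff E lam n x i)"

definition vertex_property :: "'v set \<Rightarrow> ('v \<times> 'v) set \<Rightarrow> nat \<Rightarrow> (nat \<Rightarrow> 'v pt) \<Rightarrow> bool" where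
  "vertex_property V E n x \<longleftrightarrow> (\<forall>v\<in>V. vdeg E v \<ge> 3 \<longrightarrow> (\<exists>i\<in>{1..n}. x i = Vtx v))"

end

theory Submission
  imports Defs
begin
locale net =
  fixes V :: "'v set" and E :: "('v \<times> 'v) set" and lam :: "'v \<times> 'v \<Rightarrow> real"
  assumes network: "network V E lam"
begin

lemma finV: "finite V" using network unfolding network_def by blast
lemma EV: "E \<subseteq> V \<times> V" using network unfolding network_def by blast
lemma finE: "finite E" using finV EV finite_subset by blast
lemma Ene: "E \<noteq> {}" using network unfolding network_def by blast
lemma Eirr: "(u, v) \<in> E \<Longrightarrow> u \<noteq> v \<and> (v, u) \<notin> E" using network unfolding network_def by blast
lemma lampos: "e \<in> E \<Longrightarrow> lam e > 0" using network unfolding network_def by blast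
lemma conn: "u \<in> V \<Longrightarrow> v \<in> V \<Longrightarrow> \<exists>ws. is_walk E ws \<and> hd ws = u \<and> last ws = v"
  using network unfolding network_def by blast

lemma elen_pos: "adj E u v \<Longrightarrow> elen E lam u v > 0"
  unfolding adj_def elen_def using lampos by auto

lemma elen_edge1: "(u, v) \<in> E \<Longrightarrow> elen E lam u v = lam (u, v)"
  unfolding elen_def by auto
lemma elen_edge2: "(v, u) \<in> E \<Longrightarrow> elen E lam u v = lam (v, u)"
  unfolding elen_def using Eirr by auto

lemma walk_len_nonneg: assumes "is_walk E ws" shows "walk_len E lam ws \<ge> 0"
proof -
  have "\<forall>i. Suc i < length ws \<longrightarrow> adj E (ws ! i) (ws ! Suc i)" using assms unfolding is_walk_def by blast
  then show ?thesis unfolding walk_len_def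
    by (intro sum_nonneg) (metis elen_pos less_imp_le lessThan_iff less_diff_conv add.commute plus_1_eq_Suc)
qed

lemma walk_single: "is_walk E [u]" "walk_len E lam [u] = 0"
  unfolding is_walk_def walk_len_def by auto

lemma walk_split:
  assumes "is_walk E ws" "length ws \<ge> 2"
  shows "walk_len E lam ws = elen E lam (ws ! 0) (ws ! 1) + walk_len E lam (tl ws)"
    "is_walk E (tl ws)" "hd (tl ws) = ws ! 1" "last (tl ws) = last ws" "adj E (ws ! 0) (ws ! 1)"
proof -
  define m where "m = length ws - 2"
  have m: "length ws - 1 = Suc m" "length (tl ws) - 1 = m" using assms(2) unfolding m_def by auto
  show "walk_len E lam ws = elen E lam (ws ! 0) (ws ! 1) + walk_len E lam (tl ws)"
    unfolding walk_len_def m sum.lessThan_Suc_shift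
    using assms(2) by (cases ws) (auto simp: nth_tl)
  show "is_walk E (tl ws)" using assms unfolding is_walk_def
    by (cases ws) auto
  show "hd (tl ws) = ws ! 1" using assms(2) by (cases ws; cases "tl ws") auto
  show "last (tl ws) = last ws" using assms(2) by (cases ws) auto
  show "adj E (ws ! 0) (ws ! 1)" using assms unfolding is_walk_def by auto
qed

definition WS where "WS u v = {walk_len E lam ws | ws. is_walk E ws \<and> hd ws = u \<and> last ws = v}"

lemma dV_WS: "dV E lam u v = Inf (WS u v)" unfolding dV_def WS_def ..

lemma WS_ne: "u \<in> V \<Longrightarrow> v \<in> V \<Longrightarrow> WS u v \<noteq> {}"
  using conn unfolding WS_def by blast

lemma WS_bdd: "bdd_below (WS u v)"
  unfolding WS_def bdd_below_def using walk_len_nonneg by blast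

lemma dV_le: "is_walk E ws \<Longrightarrow> hd ws = u \<Longrightarrow> last ws = v \<Longrightarrow> dV E lam u v \<le> walk_len E lam ws"
  unfolding dV_WS by (rule cInf_lower[OF _ WS_bdd]) (auto simp: WS_def)

lemma dV_ge: "u \<in> V \<Longrightarrow> v \<in> V \<Longrightarrow>
   (\<And>ws. is_walk E ws \<Longrightarrow> hd ws = u \<Longrightarrow> last ws = v \<Longrightarrow> b \<le> walk_len E lam ws) \<Longrightarrow> b \<le> dV E lam u v"
  unfolding dV_WS by (rule cInf_greatest[OF WS_ne]) (auto simp: WS_def)

lemma dV_nonneg: "u \<in> V \<Longrightarrow> v \<in> V \<Longrightarrow> dV E lam u v \<ge> 0"
  by (rule dV_ge) (auto intro: walk_len_nonneg)

lemma dV_refl: "u \<in> V \<Longrightarrow> dV E lam u u = 0"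
  using dV_le[OF walk_single(1), of u u] dV_nonneg[of u u] by (simp add: walk_single)

lemma walk_len2: "is_walk E ws \<Longrightarrow> hd ws \<noteq> last ws \<Longrightarrow> length ws \<ge> 2"
  unfolding is_walk_def by (cases ws; cases "tl ws") auto

definition mu where "mu = Min (lam ` E)"

lemma mu_pos: "mu > 0"
  unfolding mu_def using finE Ene lampos by (subst Min_gr_iff) auto

lemma elen_ge_mu: "adj E u v \<Longrightarrow> elen E lam u v \<ge> mu"
  unfolding adj_def mu_def using finE elen_edge1 elen_edge2 by (auto intro: Min_le)

lemma dV_pos: "u \<in> V \<Longrightarrow> v \<in> V \<Longrightarrow> u \<noteq> v \<Longrightarrow> dV E lam u v > 0"
proof -
  assume a: "u \<in> V" "v \<in> V" "u \<noteq> v"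
  have "mu \<le> dV E lam u v"
  proof (rule dV_ge[OF a(1,2)])
    fix ws assume w: "is_walk E ws" "hd ws = u" "last ws = v"
    have l: "length ws \<ge> 2" using walk_len2 w a by auto
    note sp = walk_split[OF w(1) l]
    have "0 \<le> walk_len E lam (tl ws)" using walk_len_nonneg sp(2) by auto
    then show "mu \<le> walk_len E lam ws" using sp(1) elen_ge_mu[OF sp(5)] by linarith
  qed
  then show ?thesis using mu_pos by linarith
qed

definition inc where "inc u = {e \<in> E. fst e = u \<or> snd e = u}"

lemma vdeg_inc: "vdeg E u = card (inc u)" unfolding vdeg_def inc_def ..

lemma leaf_unique:
  assumes "vdeg E u = 1" "e \<in> E" "fst e = u \<or> snd e = u" "e' \<in> E" "fst e' = u \<or> snd e' = u"
  shows "e' = e"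
proof -
  have "card (inc u) = 1" using assms(1) vdeg_inc by simp
  then obtain f where "inc u = {f}" by (metis card_1_singletonE)
  moreover have "e \<in> inc u" "e' \<in> inc u" using assms(2-5) unfolding inc_def by auto
  ultimately show ?thesis by auto
qed

definition other :: "'v \<times> 'v \<Rightarrow> 'v \<Rightarrow> 'v" where
  "other e c = (if c = fst e then snd e else fst e)"

lemma leaf_adj:
  assumes "vdeg E u = 1" "e \<in> E" "fst e = u \<or> snd e = u" "adj E u d"
  shows "d = other e u"
proof -
  from assms(4) have "(u, d) \<in> E \<or> (d, u) \<in> E" unfolding adj_def .
  then show ?thesis
  proof
    assume h: "(u, d) \<in> E"
    then have "(u, d) = e" using leaf_unique[OF assms(1-3) h] by auto
    then show ?thesis unfolding other_def using Eirr h by auto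
  next
    assume h: "(d, u) \<in> E"
    then have "(d, u) = e" using leaf_unique[OF assms(1-3) h] by auto
    then show ?thesis unfolding other_def using Eirr h by auto
  qed
qed

lemma elen_e: "e \<in> E \<Longrightarrow> c = fst e \<or> c = snd e \<Longrightarrow> elen E lam c (other e c) = lam e"
proof -
  assume a: "e \<in> E" "c = fst e \<or> c = snd e"
  obtain p q where e: "e = (p, q)" by (cases e)
  show ?thesis using a elen_edge1[of p q] elen_edge2[of p q] Eirr[of p q] unfolding e other_def by auto
qed

lemma dV_leaf:
  assumes "vdeg E u = 1" "e \<in> E" "fst e = u \<or> snd e = u" "d \<in> V" "d \<noteq> u"
  shows "dV E lam u d \<ge> lam e + dV E lam (other e u) d"
proof -
  have uV: "u \<in> V" and oV: "other e u \<in> V" using assms(2,3) EV unfolding other_def by (cases e; auto)+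
  show ?thesis
  proof (rule dV_ge[OF uV assms(4)])
    fix ws assume w: "is_walk E ws" "hd ws = u" "last ws = d"
    have l: "length ws \<ge> 2" using walk_len2 w assms by auto
    note sp = walk_split[OF w(1) l]
    have h0: "ws ! 0 = u" using w(2) l by (cases ws) auto
    have h1: "ws ! 1 = other e u" using leaf_adj[OF assms(1-3)] sp(5) h0 by auto
    have "dV E lam (other e u) d \<le> walk_len E lam (tl ws)"
      using dV_le[OF sp(2)] sp(3,4) h1 w(3) by auto
    moreover have "elen E lam (ws ! 0) (ws ! 1) = lam e" unfolding h0 h1 using elen_e[OF assms(2)] assms(3) by metis
    ultimately show "lam e + dV E lam (other e u) d \<le> walk_len E lam ws" using sp(1) by linarith
  qed
qed

end

context net begin

definition De :: "'v \<Rightarrow> 'v pt \<Rightarrow> real" where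
  "De d q = Min {dV E lam d c + r | c r. (c, r) \<in> ends lam q}"

lemma De_Vtx[simp]: "De d (Vtx u) = dV E lam d u"
  unfolding De_def by simp

lemma De_Mid: "De d (Mid (a, b) t) = min (dV E lam d a + t) (dV E lam d b + (lam (a, b) - t))"
proof -
  have "{dV E lam d c + r | c r. (c, r) \<in> ends lam (Mid (a, b) t)} =
        {dV E lam d a + t, dV E lam d b + (lam (a, b) - t)}" by auto
  then show ?thesis unfolding De_def by simp
qed

lemma dvia_Mid: "dvia E lam (Mid (a, b) t) q = min (t + De a q) (lam (a, b) - t + De b q)"
proof (cases q)
  case (Vtx u)
  have "{s + dV E lam a' b' + r | a' s b' r. (a', s) \<in> ends lam (Mid (a, b) t) \<and> (b', r) \<in> ends lam q}
     = {t + dV E lam a u, lam (a, b) - t + dV E lam b u}" unfolding Vtx by auto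
  then show ?thesis unfolding dvia_def Vtx by (simp add: ac_simps)
next
  case (Mid e' t')
  obtain a' b' where e': "e' = (a', b')" by (cases e')
  have "{s + dV E lam a'' b'' + r | a'' s b'' r. (a'', s) \<in> ends lam (Mid (a, b) t) \<and> (b'', r) \<in> ends lam q}
     = {t + dV E lam a a' + t', t + dV E lam a b' + (lam (a', b') - t'),
        lam (a, b) - t + dV E lam b a' + t', lam (a, b) - t + dV E lam b b' + (lam (a', b') - t')}"
    unfolding Mid e' by auto
  then show ?thesis unfolding dvia_def Mid e' De_Mid by (simp add: min_add_distrib_left min_add_distrib_right ac_simps)
qed

lemma points_cases:
  assumes "q \<in> points V E lam"
  obtains u where "q = Vtx u" "u \<in> V"
  | a b t where "q = Mid (a, b) t" "(a, b) \<in> E" "0 < t" "t < lam (a, b)"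
  using assms unfolding points_def by auto

lemma endV: "(a, b) \<in> E \<Longrightarrow> a \<in> V \<and> b \<in> V" using EV by auto

lemma De_nonneg: assumes "d \<in> V" "q \<in> points V E lam" shows "0 \<le> De d q"
  using assms(2)
proof (cases rule: points_cases)
  case (1 u) then show ?thesis using dV_nonneg assms(1) by simp
next
  case (2 a b t) then show ?thesis using dV_nonneg[OF assms(1)] endV[of a b] by (simp add: De_Mid)
qed

lemma De_pos: assumes "d \<in> V" "q \<in> points V E lam" "q \<noteq> Vtx d" shows "0 < De d q"
  using assms(2)
proof (cases rule: points_cases)
  case (1 u) then show ?thesis using dV_pos assms(1,3) by simp
next
  case (2 a b t)
  have "0 \<le> dV E lam d a" "0 \<le> dV E lam d b" using dV_nonneg[OF assms(1)] endV[OF 2(2)] by auto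
  then show ?thesis using 2 by (simp add: De_Mid)
qed

lemma De_leaf:
  assumes "vdeg E u = 1" "e \<in> E" "fst e = u \<or> snd e = u" "q \<in> points V E lam"
    "q \<noteq> Vtx u" "q \<noteq> Vtx (other e u)" "\<forall>t. q \<noteq> Mid e t"
  shows "De u q \<ge> lam e + De (other e u) q"
  using assms(4)
proof (cases rule: points_cases)
  case (1 w)
  then show ?thesis using dV_leaf[OF assms(1-3), of w] assms(5) by simp
next
  case (2 a b t)
  have ne: "(a, b) \<noteq> e" using assms(7) 2 by auto
  have "a \<noteq> u" "b \<noteq> u" using leaf_unique[OF assms(1-3), of "(a,b)"] ne 2 by auto
  then show ?thesis using dV_leaf[OF assms(1-3), of a] dV_leaf[OF assms(1-3), of b] endV[OF 2(2)]
    unfolding 2 De_Mid by (simp add: min_def)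
qed

definition coord :: "'v \<times> 'v \<Rightarrow> 'v \<Rightarrow> real \<Rightarrow> real" where
  "coord e c s = (if c = fst e then s else lam e - s)"

lemma coord_inv[simp]: "coord e c (coord e c s) = s" unfolding coord_def by auto

lemma other_other: "c = fst e \<or> c = snd e \<Longrightarrow> other e (other e c) = c"
  unfolding other_def by auto

lemma other_end: "e \<in> E \<Longrightarrow> c = fst e \<or> c = snd e \<Longrightarrow> (other e c = fst e \<or> other e c = snd e) \<and> other e c \<noteq> c"
  unfolding other_def using Eirr[of "fst e" "snd e"] by auto

lemma De_leaf_Vo:
  assumes "vdeg E u = 1" "e \<in> E" "fst e = u \<or> snd e = u"
  shows "De u (Vtx (other e u)) \<ge> lam e"
proof -
  have o: "other e u = fst e \<or> other e u = snd e" "other e u \<noteq> u" using other_end[OF assms(2)] assms(3) by metis+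
  have "fst e \<in> V" "snd e \<in> V" using endV[of "fst e" "snd e"] assms(2) by auto
  then have "other e u \<in> V" using o by metis
  then have "dV E lam u (other e u) \<ge> lam e + dV E lam (other e u) (other e u)" using dV_leaf[OF assms(1-3), of "other e u"] o(2) by blast
  then show ?thesis using dV_refl[OF \<open>other e u \<in> V\<close>] by simp
qed

lemma De_leaf_Mid:
  assumes "vdeg E u = 1" "e \<in> E" "fst e = u \<or> snd e = u" "0 < t" "t < lam e"
  shows "De u (Mid e t) \<ge> lam e - coord e (other e u) t"
proof -
  obtain a b where e: "e = (a, b)" by (cases e)
  have ab: "a \<in> V" "b \<in> V" "a \<noteq> b" using endV Eirr assms(2) unfolding e by auto
  show ?thesis
  proof (cases "u = a")
    case True
    then have "other e u = b" unfolding other_def e by auto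
    then show ?thesis using True dV_leaf[OF assms(1-3), of b] dV_refl ab dV_nonneg assms(4,5)
      unfolding e De_Mid coord_def by (auto simp: min_def)
  next
    case False
    then have "u = b" using assms(3) e by auto
    then have "other e u = a" using ab unfolding other_def e by auto
    then show ?thesis using \<open>u = b\<close> dV_leaf[OF assms(1-3), of a] dV_refl ab dV_nonneg assms(4,5)
      unfolding e De_Mid coord_def by (auto simp: min_def)
  qed
qed

lemma PD:
  assumes "e \<in> E" "c = fst e \<or> c = snd e"
  shows "pdist E lam (Mid e (coord e c s)) q =
    (case q of Mid e' t' \<Rightarrow> if e' = e then min \<bar>s - coord e c t'\<bar> (min (s + De c q) (lam e - s + De (other e c) q))
       else min (s + De c q) (lam e - s + De (other e c) q)
     | Vtx u \<Rightarrow> min (s + De c q) (lam e - s + De (other e c) q))"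
proof -
  obtain a b where e: "e = (a, b)" by (cases e)
  have D: "dvia E lam (Mid e (coord e c s)) q = min (s + De c q) (lam e - s + De (other e c) q)"
    using assms(2) unfolding e coord_def other_def dvia_Mid by (auto simp: min_def)
  have A: "\<bar>coord e c s - t'\<bar> = \<bar>s - coord e c t'\<bar>" for t' unfolding coord_def by auto
  show ?thesis using D A by (cases q) auto
qed

end

context net begin

lemma endp: "e \<in> E \<Longrightarrow> c = fst e \<or> c = snd e \<Longrightarrow> c \<in> V"
  using endV[of "fst e" "snd e"] by auto

lemma PL1:
  assumes "e \<in> E" "c = fst e \<or> c = snd e" "\<forall>t. q \<noteq> Mid e t"
  shows "pdist E lam (Mid e (coord e c s)) q = min (s + De c q) (lam e - s + De (other e c) q)"
  using PD[OF assms(1,2), of s q] assms(3) by (cases q) auto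

lemma PL2:
  assumes "e \<in> E" "c = fst e \<or> c = snd e"
  shows "pdist E lam (Mid e (coord e c s)) (Mid e (coord e c \<sigma>)) =
     min \<bar>s - \<sigma>\<bar> (min (s + De c (Mid e (coord e c \<sigma>))) (lam e - s + De (other e c) (Mid e (coord e c \<sigma>))))"
  using PD[OF assms(1,2), of s "Mid e (coord e c \<sigma>)"] by simp

lemma PU_c:
  assumes "e \<in> E" "c = fst e \<or> c = snd e"
  shows "pdist E lam (Mid e (coord e c s)) (Vtx c) \<le> s"
  using PL1[OF assms, of "Vtx c" s] dV_refl[OF endp[OF assms]] by simp

lemma PU_c':
  assumes "e \<in> E" "c = fst e \<or> c = snd e"
  shows "pdist E lam (Mid e (coord e c s)) (Vtx (other e c)) \<le> lam e - s"
proof -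
  have o: "other e c = fst e \<or> other e c = snd e" using other_end[OF assms] by blast
  show ?thesis using PL1[OF assms, of "Vtx (other e c)" s] dV_refl[OF endp[OF assms(1) o]] by simp
qed

lemma PU_mid:
  assumes "e \<in> E" "c = fst e \<or> c = snd e"
  shows "pdist E lam (Mid e (coord e c s)) (Mid e (coord e c \<sigma>)) \<le> \<bar>s - \<sigma>\<bar>"
  using PL2[OF assms] by simp

lemma coord_range: "0 < s \<Longrightarrow> s < lam e \<Longrightarrow> 0 < coord e c s \<and> coord e c s < lam e"
  unfolding coord_def by auto

lemma Mid_points: "e \<in> E \<Longrightarrow> 0 < s \<Longrightarrow> s < lam e \<Longrightarrow> Mid e (coord e c s) \<in> points V E lam"
  unfolding points_def using coord_range by blast

lemma offedge:
  assumes Oc: "Oc \<subseteq> points V E lam"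
    and good: "\<forall>u. (u = fst e \<or> u = snd e) \<longrightarrow> Vtx u \<in> Oc \<or> vdeg E u = 1"
    and e: "e \<in> E" and w: "w \<in> Oc" "w \<noteq> Vtx (fst e)" "w \<noteq> Vtx (snd e)" "\<forall>t. w \<noteq> Mid e t"
    and s: "0 < s" "s < lam e"
  shows "\<exists>z\<in>Oc. pdist E lam (Mid e (coord e (fst e) s)) z < pdist E lam (Mid e (coord e (fst e) s)) w"
proof -
  define a where "a = fst e"
  define b where "b = snd e"
  have ab: "a = fst e \<or> a = snd e" "b = fst e \<or> b = snd e" unfolding a_def b_def by auto
  have oa: "other e a = b" and ob: "other e b = a" unfolding a_def b_def other_def using Eirr[of "fst e" "snd e"] e by auto
  have wp: "w \<in> points V E lam" using w Oc by auto
  have A: "De a w > 0" using De_pos[OF endp[OF e ab(1)] wp] w unfolding a_def by auto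
  have B: "De b w > 0" using De_pos[OF endp[OF e ab(2)] wp] w unfolding b_def by auto
  have pw: "pdist E lam (Mid e (coord e a s)) w = min (s + De a w) (lam e - s + De b w)"
    using PL1[OF e ab(1) w(4)] oa by simp
  have pa: "pdist E lam (Mid e (coord e a s)) (Vtx a) \<le> s" using PU_c[OF e ab(1)] .
  have pb: "pdist E lam (Mid e (coord e a s)) (Vtx b) \<le> lam e - s" using PU_c'[OF e ab(1)] oa by simp
  have la: "Vtx a \<notin> Oc \<Longrightarrow> De a w \<ge> lam e + De b w"
    using De_leaf[of a e w] good ab e wp w oa unfolding a_def b_def by auto
  have lb: "Vtx b \<notin> Oc \<Longrightarrow> De b w \<ge> lam e + De a w"
    using De_leaf[of b e w] good ab e wp w ob unfolding a_def b_def by auto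
  have lpos: "lam e > 0" using lampos e by auto
  have "\<exists>z\<in>Oc. pdist E lam (Mid e (coord e a s)) z < pdist E lam (Mid e (coord e a s)) w"
  proof (cases "Vtx a \<in> Oc")
    case True note Ta = True
    show ?thesis
    proof (cases "Vtx b \<in> Oc")
      case True
      show ?thesis
      proof (cases "s \<le> lam e - s")
        case True then show ?thesis using Ta pa pw A B s by (intro bexI[of _ "Vtx a"]) auto
      next
        case False then show ?thesis using \<open>Vtx b \<in> Oc\<close> pb pw A B s by (intro bexI[of _ "Vtx b"]) auto
      qed
    next
      case False
      then show ?thesis using Ta pa pw A lb s by (intro bexI[of _ "Vtx a"]) auto
    qed
  next
    case False note Fa = False
    show ?thesis
    proof (cases "Vtx b \<in> Oc")
      case True
      then show ?thesis using Fa pb pw B la s by (intro bexI[of _ "Vtx b"]) auto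
    next
      case False
      then show ?thesis using la lb Fa lpos by auto
    qed
  qed
  then show ?thesis unfolding a_def .
qed

end

context net begin

definition RR where
  "RR Oc e c \<sigma>0 = {\<sigma>. \<sigma>0 < \<sigma> \<and> \<sigma> \<le> lam e \<and>
     ((\<sigma> = lam e \<and> Vtx (other e c) \<in> Oc) \<or> (\<sigma> < lam e \<and> Mid e (coord e c \<sigma>) \<in> Oc))}"

definition rho where
  "rho Oc e c \<sigma>0 = (if RR Oc e c \<sigma>0 = {} then lam e - \<sigma>0 else Min (RR Oc e c \<sigma>0) - \<sigma>0)"

definition mm where
  "mm Oc e c \<sigma>0 = (if RR Oc e c \<sigma>0 = {} then lam e - \<sigma>0 else (Min (RR Oc e c \<sigma>0) - \<sigma>0) / 2)"

lemma RR_finite: assumes "finite Oc" shows "finite (RR Oc e c \<sigma>0)"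
proof -
  have f: "finite {t. Mid e t \<in> Oc}" using finite_vimageI[OF assms, of "Mid e"] by (auto simp: inj_def vimage_def)
  have "RR Oc e c \<sigma>0 \<subseteq> insert (lam e) (coord e c ` {t. Mid e t \<in> Oc})"
    unfolding RR_def by (auto intro!: image_eqI[of _ "coord e c", OF coord_inv[symmetric]])
  then show ?thesis using f finite_subset by blast
qed

lemma RR_mem: "\<sigma> \<in> RR Oc e c \<sigma>0 \<Longrightarrow> \<sigma>0 < \<sigma> \<and> \<sigma> \<le> lam e" unfolding RR_def by auto

lemma RR_min:
  assumes "finite Oc" "RR Oc e c \<sigma>0 \<noteq> {}"
  shows "Min (RR Oc e c \<sigma>0) \<in> RR Oc e c \<sigma>0" "\<And>\<sigma>. \<sigma> \<in> RR Oc e c \<sigma>0 \<Longrightarrow> Min (RR Oc e c \<sigma>0) \<le> \<sigma>"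
  using RR_finite[OF assms(1)] assms(2) by auto

lemma rho_mm:
  assumes "finite Oc" "\<sigma>0 < lam e"
  shows "0 < mm Oc e c \<sigma>0" "mm Oc e c \<sigma>0 \<le> rho Oc e c \<sigma>0" "\<sigma>0 + rho Oc e c \<sigma>0 \<le> lam e"
proof -
  have "RR Oc e c \<sigma>0 \<noteq> {} \<Longrightarrow> \<sigma>0 < Min (RR Oc e c \<sigma>0) \<and> Min (RR Oc e c \<sigma>0) \<le> lam e"
  proof -
    assume "RR Oc e c \<sigma>0 \<noteq> {}"
    from RR_min(1)[OF assms(1) this] show ?thesis by (rule RR_mem)
  qed
  then show "0 < mm Oc e c \<sigma>0" "mm Oc e c \<sigma>0 \<le> rho Oc e c \<sigma>0" "\<sigma>0 + rho Oc e c \<sigma>0 \<le> lam e"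
    unfolding mm_def rho_def using assms(2) by (cases "RR Oc e c \<sigma>0 = {}"; simp)+
qed

definition wpos where
  "wpos e c w \<sigma>0 \<longleftrightarrow> (w = Vtx c \<and> \<sigma>0 = 0) \<or> (0 < \<sigma>0 \<and> \<sigma>0 < lam e \<and> w = Mid e (coord e c \<sigma>0))"

lemma LW:
  assumes e: "e \<in> E" and c: "c = fst e \<or> c = snd e" and w: "wpos e c w \<sigma>0" and s: "\<sigma>0 < s"
  shows "pdist E lam (Mid e (coord e c s)) w \<ge> min (s - \<sigma>0) (lam e - s + De (other e c) w)"
  using w unfolding wpos_def
proof
  assume h: "w = Vtx c \<and> \<sigma>0 = 0"
  then show ?thesis using PL1[OF e c, of w s] dV_refl[OF endp[OF e c]] by simp
next
  assume h: "0 < \<sigma>0 \<and> \<sigma>0 < lam e \<and> w = Mid e (coord e c \<sigma>0)"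
  have "0 \<le> De c w" using De_nonneg[OF endp[OF e c]] Mid_points[OF e] h by auto
  then show ?thesis using PL2[OF e c, of s \<sigma>0] h s by (auto simp: min_def)
qed

lemma wpos_range: "e \<in> E \<Longrightarrow> wpos e c w \<sigma>0 \<Longrightarrow> 0 \<le> \<sigma>0 \<and> \<sigma>0 < lam e"
  unfolding wpos_def using lampos[of e] by auto

lemma wpos_points: "e \<in> E \<Longrightarrow> c = fst e \<or> c = snd e \<Longrightarrow> wpos e c w \<sigma>0 \<Longrightarrow> w \<in> points V E lam"
  unfolding wpos_def using Mid_points endp unfolding points_def by blast

lemma wpos_ne: "e \<in> E \<Longrightarrow> c = fst e \<or> c = snd e \<Longrightarrow> wpos e c w \<sigma>0 \<Longrightarrow> w \<noteq> Vtx (other e c)"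
  unfolding wpos_def using other_end[of e c] by auto

lemma De_leaf_w:
  assumes e: "e \<in> E" and c: "c = fst e \<or> c = snd e" and w: "wpos e c w \<sigma>0"
    and leaf: "vdeg E (other e c) = 1"
  shows "De (other e c) w \<ge> lam e - \<sigma>0"
proof -
  have o: "fst e = other e c \<or> snd e = other e c" using other_end[OF e c] by auto
  have oo: "other e (other e c) = c" using other_other[OF c] .
  show ?thesis using w unfolding wpos_def
  proof
    assume h: "w = Vtx c \<and> \<sigma>0 = 0"
    then show ?thesis using De_leaf_Vo[OF leaf e o] oo by simp
  next
    assume h: "0 < \<sigma>0 \<and> \<sigma>0 < lam e \<and> w = Mid e (coord e c \<sigma>0)"
    then show ?thesis using De_leaf_Mid[OF leaf e o, of "coord e c \<sigma>0"] coord_range oo by auto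
  qed
qed

lemma Ulem:
  assumes Oc: "Oc \<subseteq> points V E lam" "finite Oc"
    and good: "\<forall>u. (u = fst e \<or> u = snd e) \<longrightarrow> Vtx u \<in> Oc \<or> vdeg E u = 1"
    and e: "e \<in> E" and c: "c = fst e \<or> c = snd e"
    and w: "w \<in> Oc" "wpos e c w \<sigma>0"
    and s: "s < lam e" "s - \<sigma>0 > mm Oc e c \<sigma>0"
  shows "\<exists>z\<in>Oc. pdist E lam (Mid e (coord e c s)) z < pdist E lam (Mid e (coord e c s)) w"
proof -
  let ?R = "RR Oc e c \<sigma>0"
  let ?p = "Mid e (coord e c s)"
  let ?c' = "other e c"
  have r0: "0 \<le> \<sigma>0" "\<sigma>0 < lam e" using wpos_range[OF e w(2)] by auto
  have Rne: "?R \<noteq> {}" using s unfolding mm_def by (auto split: if_splits)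
  define r where "r = Min ?R"
  have rR: "r \<in> ?R" using RR_min[OF Oc(2) Rne] unfolding r_def by auto
  have r1: "\<sigma>0 < r" "r \<le> lam e" using RR_mem[OF rR] by auto
  have s2: "2 * s > r + \<sigma>0" using s(2) Rne unfolding mm_def r_def by auto
  have spos: "\<sigma>0 < s" using s2 r1 by auto
  have "\<exists>z\<in>Oc. pdist E lam ?p z \<le> \<bar>s - r\<bar>"
  proof (cases "r = lam e \<and> Vtx ?c' \<in> Oc")
    case True
    then show ?thesis using PU_c'[OF e c, of s] s by (intro bexI[of _ "Vtx ?c'"]) auto
  next
    case False
    then have "Mid e (coord e c r) \<in> Oc" using rR unfolding RR_def by auto
    then show ?thesis using PU_mid[OF e c, of s r] by blast
  qed
  then obtain z where z: "z \<in> Oc" "pdist E lam ?p z \<le> \<bar>s - r\<bar>" by blast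
  have lw: "pdist E lam ?p w \<ge> min (s - \<sigma>0) (lam e - s + De ?c' w)" using LW[OF e c w(2) spos] .
  have wp: "w \<in> points V E lam" using wpos_points[OF e c w(2)] .
  have o: "?c' = fst e \<or> ?c' = snd e" using other_end[OF e c] by auto
  show ?thesis
  proof (cases "Vtx ?c' \<in> Oc")
    case True
    have Dp: "De ?c' w > 0" using De_pos[OF endp[OF e o] wp wpos_ne[OF e c w(2)]] .
    have pc: "pdist E lam ?p (Vtx ?c') \<le> lam e - s" using PU_c'[OF e c] .
    show ?thesis
    proof (cases "s - \<sigma>0 \<le> lam e - s + De ?c' w")
      case True
      have "\<bar>s - r\<bar> < s - \<sigma>0" using s2 r1 by (simp add: abs_less_iff)
      then have "\<bar>s - r\<bar> < min (s - \<sigma>0) (lam e - s + De ?c' w)" using True by simp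
      then show ?thesis using z lw by (intro bexI[of _ z]) linarith
    next
      case False
      then show ?thesis using \<open>Vtx ?c' \<in> Oc\<close> pc lw Dp by (intro bexI[of _ "Vtx ?c'"]) (auto simp: min_def)
    qed
  next
    case False
    then have leaf: "vdeg E ?c' = 1" using good o by auto
    have D: "De ?c' w \<ge> lam e - \<sigma>0" using De_leaf_w[OF e c w(2) leaf] .
    have "r < lam e" using rR False unfolding RR_def by auto
    then have "\<bar>s - r\<bar> < s - \<sigma>0" "\<bar>s - r\<bar> < lam e - s + De ?c' w" using s2 r1 r0 s D by (simp_all add: abs_less_iff)
    then have "\<bar>s - r\<bar> < min (s - \<sigma>0) (lam e - s + De ?c' w)" by simp
    then show ?thesis using z lw by (intro bexI[of _ z]) linarith
  qed
qed

end

context net begin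

lemma Mid_pointsD: "Mid e t \<in> points V E lam \<Longrightarrow> e \<in> E \<and> 0 < t \<and> t < lam e"
  unfolding points_def by auto

lemma Dvlem:
  assumes Oc: "Oc \<subseteq> points V E lam" "finite Oc"
    and good: "\<forall>u. (u = fst e \<or> u = snd e) \<longrightarrow> Vtx u \<in> Oc \<or> vdeg E u = 1"
    and e: "e \<in> E" and c: "c = fst e \<or> c = snd e"
    and w: "w \<in> Oc" "wpos e c w \<sigma>0"
    and d: "0 < \<delta>" "\<delta> < rho Oc e c \<sigma>0"
    and s: "\<sigma>0 + \<delta> / 2 < s" "s < \<sigma>0 + mm Oc e c \<sigma>0"
  shows "\<forall>z\<in>Oc. pdist E lam (Mid e (coord e c s)) (Mid e (coord e c (\<sigma>0 + \<delta>)))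
                 < pdist E lam (Mid e (coord e c s)) z"
    and "Mid e (coord e c (\<sigma>0 + \<delta>)) \<notin> Oc"
    and "Mid e (coord e c (\<sigma>0 + \<delta>)) \<in> points V E lam"
proof -
  let ?R = "RR Oc e c \<sigma>0"
  let ?p = "Mid e (coord e c s)"
  let ?y = "Mid e (coord e c (\<sigma>0 + \<delta>))"
  let ?c' = "other e c"
  have r0: "0 \<le> \<sigma>0" "\<sigma>0 < lam e" using wpos_range[OF e w(2)] by auto
  note rm = rho_mm[OF Oc(2) r0(2), of c]
  have sl: "s < lam e" using s rm by linarith
  have yl: "\<sigma>0 + \<delta> < lam e" using d rm by linarith
  define \<epsilon> where "\<epsilon> = \<bar>s - (\<sigma>0 + \<delta>)\<bar>"
  have py: "pdist E lam ?p ?y \<le> \<epsilon>" unfolding \<epsilon>_def by (rule PU_mid[OF e c])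
  have e1: "\<epsilon> < s - \<sigma>0" "\<epsilon> < s" unfolding \<epsilon>_def using s d r0 by (simp_all add: abs_less_iff)
  have o: "?c' = fst e \<or> ?c' = snd e" using other_end[OF e c] by auto
  have oo: "other e ?c' = c" using other_other[OF c] .
  have cV: "c \<in> V" "?c' \<in> V" using endp[OF e c] endp[OF e o] .
  have Rmin: "?R \<noteq> {} \<Longrightarrow> Min ?R \<in> ?R \<and> (\<forall>\<sigma>\<in>?R. Min ?R \<le> \<sigma>)" using RR_min[OF Oc(2)] by blast
  have T: "\<epsilon> < lam e - s + De ?c' z" if z: "z \<in> Oc" for z
  proof (cases "?R = {}")
    case False
    then have "Min ?R \<le> lam e" using Rmin RR_mem by blast
    moreover have "s < \<sigma>0 + (Min ?R - \<sigma>0) / 2" "\<delta> < Min ?R - \<sigma>0" using False s d unfolding mm_def rho_def by auto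
    ultimately have "s - (\<sigma>0 + \<delta>) < lam e - s \<and> - (s - (\<sigma>0 + \<delta>)) < lam e - s" using s d by argo
    then have "\<epsilon> < lam e - s" unfolding \<epsilon>_def abs_less_iff by blast
    moreover have "0 \<le> De ?c' z" using De_nonneg[OF cV(2)] z Oc by auto
    ultimately show ?thesis by linarith
  next
    case True
    then have nc': "Vtx ?c' \<notin> Oc" using r0 unfolding RR_def by auto
    then have leaf: "vdeg E ?c' = 1" using good o by auto
    have zp: "z \<in> points V E lam" using z Oc by auto
    have D: "De ?c' z \<ge> lam e - \<sigma>0"
    proof (cases "z = Vtx c")
      case True
      then show ?thesis using De_leaf_Vo[OF leaf e] o oo r0 by auto
    next
      case False note zc = False
      show ?thesis
      proof (cases "\<exists>t. z = Mid e t")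
        case True
        then obtain t where zt: "z = Mid e t" by blast
        have t: "0 < t" "t < lam e" using Mid_pointsD zp zt by auto
        have "\<not> coord e c t > \<sigma>0"
        proof
          assume "coord e c t > \<sigma>0"
          then have "coord e c t \<in> ?R" unfolding RR_def using coord_range[OF t, of c] z zt by (auto intro: less_imp_le)
          then show False using \<open>?R = {}\<close> by auto
        qed
        then show ?thesis using De_leaf_Mid[OF leaf e _ t] o oo zt by auto
      next
        case False
        have "z \<noteq> Vtx ?c'" using nc' z by auto
        then have "De ?c' z \<ge> lam e + De (other e ?c') z" using De_leaf[OF leaf e _ zp] o zc False oo by auto
        moreover have "0 \<le> De c z" using De_nonneg[OF cV(1) zp] .
        ultimately show ?thesis using oo r0 by auto
      qed
    qed
    have "\<epsilon> < lam e - s + (lam e - \<sigma>0)" using True s d sl r0 unfolding \<epsilon>_def mm_def rho_def by (simp add: abs_less_iff)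
    then show ?thesis using D by linarith
  qed
  have S2: "\<epsilon> < s + De c z" if z: "z \<in> Oc" for z
    using De_nonneg[OF cV(1)] z Oc e1 by force
  show "\<forall>z\<in>Oc. pdist E lam ?p ?y < pdist E lam ?p z"
  proof
    fix z assume z: "z \<in> Oc"
    have "\<epsilon> < pdist E lam ?p z"
    proof (cases "\<exists>t. z = Mid e t")
      case False
      then show ?thesis using PL1[OF e c, of z s] T[OF z] S2[OF z] by simp
    next
      case True
      then obtain t where zt: "z = Mid e t" by blast
      have t: "0 < t" "t < lam e" using Mid_pointsD[of e t] z Oc zt by auto
      define \<sigma>z where "\<sigma>z = coord e c t"
      have zt': "z = Mid e (coord e c \<sigma>z)" unfolding \<sigma>z_def zt by simp
      have "\<epsilon> < \<bar>s - \<sigma>z\<bar>"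
      proof (cases "\<sigma>z \<le> \<sigma>0")
        case True
        then show ?thesis using e1 by (simp add: abs_if)
      next
        case False
        have cr: "0 < \<sigma>z" "\<sigma>z < lam e" using coord_range[OF t, of c] unfolding \<sigma>z_def by auto
        then have inR: "\<sigma>z \<in> ?R" unfolding RR_def using False z zt' by auto
        then have Rne: "?R \<noteq> {}" by auto
        have "Min ?R \<le> \<sigma>z" using Rmin[OF Rne] inR by auto
        moreover have "s < \<sigma>0 + (Min ?R - \<sigma>0) / 2" "\<delta> < Min ?R - \<sigma>0" using Rne s d unfolding mm_def rho_def by auto
        ultimately have "s - (\<sigma>0 + \<delta>) < \<sigma>z - s \<and> - (s - (\<sigma>0 + \<delta>)) < \<sigma>z - s" using s d by argo
        then have "\<epsilon> < \<sigma>z - s" unfolding \<epsilon>_def abs_less_iff by blast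
        moreover have "\<sigma>z - s \<le> \<bar>s - \<sigma>z\<bar>" by simp
        ultimately show ?thesis by linarith
      qed
      then show ?thesis using PL2[OF e c, of s \<sigma>z] zt' T[OF z] S2[OF z] by simp
    qed
    then show "pdist E lam ?p ?y < pdist E lam ?p z" using py by linarith
  qed
  show "?y \<in> points V E lam" using Mid_points[OF e _ yl] d r0 by auto
  show "?y \<notin> Oc"
  proof
    assume "?y \<in> Oc"
    then have inR: "\<sigma>0 + \<delta> \<in> ?R" unfolding RR_def using d yl by auto
    then have "Min ?R \<le> \<sigma>0 + \<delta>" using Rmin by blast
    moreover have "?R \<noteq> {}" using inR by auto
    ultimately show False using d unfolding rho_def by simp
  qed
qed

end

context net begin

lemma pdist_form: "pdist E lam (Mid (a, b) t) z = (case z of Vtx u \<Rightarrow> min (t + De a z) (lam (a, b) - t + De b z)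
   | Mid e' t' \<Rightarrow> if (a, b) = e' then min \<bar>t - t'\<bar> (min (t + De a z) (lam (a, b) - t + De b z))
         else min (t + De a z) (lam (a, b) - t + De b z))"
proof -
  have D: "dvia E lam (Mid (a, b) t) z = min (t + De a z) (lam (a, b) - t + De b z)" by (rule dvia_Mid)
  show ?thesis
  proof (cases z)
    case (Vtx u) then show ?thesis using D by simp
  next
    case (Mid e' t')
    show ?thesis
    proof (cases "(a, b) = e'")
      case True
      have "e' = (a, b)" using True by simp
      then show ?thesis using D unfolding Mid by simp
    next
      case False then show ?thesis using D unfolding Mid by auto
    qed
  qed
qed

lemma pdist_meas: "(\<lambda>t. pdist E lam (Mid e t) z) \<in> borel_measurable lborel"
proof -
  obtain a b where e: "e = (a, b)" by (cases e)
  show ?thesis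
  proof (cases z)
    case (Vtx u)
    show ?thesis unfolding e Vtx pdist_form by simp
  next
    case (Mid e' t')
    show ?thesis
    proof (cases "(a, b) = e'")
      case True then show ?thesis unfolding e Mid pdist_form by simp
    next
      case False then show ?thesis unfolding e Mid pdist_form by simp
    qed
  qed
qed

lemma closest_pred:
  "Measurable.pred lborel (\<lambda>t. z \<in> closest E lam n x (Mid e t))"
proof -
  have "Measurable.pred lborel (\<lambda>t. z \<in> occupied n x \<and> (\<forall>z'\<in>occupied n x. pdist E lam (Mid e t) z \<le> pdist E lam (Mid e t) z'))"
    using pdist_meas unfolding occupied_def
    by (intro pred_intros_logic pred_intros_finite) (auto intro: measurable_const)
  then show ?thesis unfolding closest_def by simp
qed

lemma share_meas: "(\<lambda>t. share E lam n x i (Mid e t)) \<in> borel_measurable lborel"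
proof -
  let ?O = "occupied n x"
  let ?C = "\<lambda>t. closest E lam n x (Mid e t)"
  have fin: "finite ?O" unfolding occupied_def by simp
  have sub: "?C t \<subseteq> ?O" for t unfolding closest_def by auto
  have C: "?C \<in> lborel \<rightarrow>\<^sub>M count_space (Pow ?O)"
  proof -
    have cnt: "countable (Pow ?O)" using fin by (simp add: countable_finite)
    show ?thesis unfolding measurable_count_space_eq_countable[OF cnt]
    proof (intro conjI Pi_I ballI)
      fix t show "?C t \<in> Pow ?O" using sub by auto
    next
      fix S assume S: "S \<in> Pow ?O"
      have "Measurable.pred lborel (\<lambda>t. \<forall>z\<in>?O. (z \<in> ?C t) = (z \<in> S))"
        using fin closest_pred by (intro pred_intros_finite pred_intros_logic) auto
      moreover have "(\<forall>z\<in>?O. (z \<in> ?C t) = (z \<in> S)) \<longleftrightarrow> ?C t = S" for t using S sub[of t] by blast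
      ultimately have "Measurable.pred lborel (\<lambda>t. ?C t = S)" by simp
      then show "?C -` {S} \<inter> space lborel \<in> sets lborel" by (simp add: pred_def vimage_def Int_def)
    qed
  qed
  have "(\<lambda>t. (\<lambda>S t. if x i \<in> S then 1 / (real (card S) * real (card {j \<in> {1..n}. x j = x i})) else 0) (?C t) t)
        \<in> borel_measurable lborel"
    by (rule measurable_compose_countable'[OF _ C]) (auto simp: countable_finite fin)
  then show ?thesis unfolding share_def by simp
qed

lemma share_nonneg: "share E lam n x i y \<ge> 0" unfolding share_def by auto

lemma share_le:
  assumes "i \<in> {1..n}" "x i \<in> closest E lam n x y"
  shows "share E lam n x i y \<le> 1 / real (card {j \<in> {1..n}. x j = x i})"
proof -
  have "finite (closest E lam n x y)" unfolding closest_def occupied_def by simp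
  then have c1: "card (closest E lam n x y) \<ge> 1" using assms(2) by (metis One_nat_def Suc_leI card_gt_0_iff empty_iff)
  have c2: "card {j \<in> {1..n}. x j = x i} \<ge> 1" using card_gt_0_iff[of "{j \<in> {1..n}. x j = x i}"] assms(1) by force
  have "1 / (real (card (closest E lam n x y)) * real (card {j \<in> {1..n}. x j = x i}))
        \<le> 1 / real (card {j \<in> {1..n}. x j = x i})"
    using c1 c2 by (intro divide_left_mono) auto
  then show ?thesis unfolding share_def using assms by simp
qed

lemma share_notin: "x i \<notin> closest E lam n x y \<Longrightarrow> share E lam n x i y = 0" unfolding share_def by simp

lemma share_one:
  assumes "i \<in> {1..n}" "closest E lam n x y = {x i}" "\<forall>j\<in>{1..n}. j \<noteq> i \<longrightarrow> x j \<noteq> x i"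
  shows "share E lam n x i y = 1"
proof -
  have "{j \<in> {1..n}. x j = x i} = {i}" using assms(1,3) by auto
  then show ?thesis unfolding share_def using assms(2) by simp
qed

lemma share_le1: "i \<in> {1..n} \<Longrightarrow> share E lam n x i y \<le> 1"
proof -
  assume i: "i \<in> {1..n}"
  have c2: "card {j \<in> {1..n}. x j = x i} \<ge> 1" using card_gt_0_iff[of "{j \<in> {1..n}. x j = x i}"] i by force
  show ?thesis
  proof (cases "x i \<in> closest E lam n x y")
    case True
    have "1 / real (card {j \<in> {1..n}. x j = x i}) \<le> 1" using c2 by simp
    then show ?thesis using share_le[OF i True] by linarith
  qed (simp add: share_def)
qed

lemma int_upper:
  fixes f :: "real \<Rightarrow> real"
  assumes "\<And>t. 0 < t \<Longrightarrow> t < l \<Longrightarrow> 0 \<le> f t"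
    and "\<And>t. 0 < t \<Longrightarrow> t < l \<Longrightarrow> f t \<le> c * indicator {\<alpha>..\<beta>} t" "0 \<le> c" "\<alpha> \<le> \<beta>"
  shows "(LINT t:{0<..<l}|lborel. f t) \<le> c * (\<beta> - \<alpha>)"
proof -
  have le: "indicator {0<..<l} t *\<^sub>R f t \<le> c * indicator {\<alpha>..\<beta>} t" for t
    using assms(1,2)[of t] assms(3) by (auto simp: indicator_def)
  have ig: "integrable lborel (\<lambda>t. c * indicator {\<alpha>..\<beta>} t :: real)"
    using assms(4) by (intro integrable_mult_right integrable_real_indicator) (auto simp: emeasure_lborel_Icc)
  have "integral\<^sup>L lborel (\<lambda>t. c * indicator {\<alpha>..\<beta>} t :: real) = c * (\<beta> - \<alpha>)"
    using assms(4) by simp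
  moreover have "integral\<^sup>L lborel (\<lambda>t. indicator {0<..<l} t *\<^sub>R f t) \<le> integral\<^sup>L lborel (\<lambda>t. c * indicator {\<alpha>..\<beta>} t :: real)"
  proof (cases "integrable lborel (\<lambda>t. indicator {0<..<l} t *\<^sub>R f t)")
    case True
    then show ?thesis using ig le by (intro integral_mono) auto
  next
    case False
    then have "integral\<^sup>L lborel (\<lambda>t. indicator {0<..<l} t *\<^sub>R f t) = 0" by (rule not_integrable_integral_eq)
    moreover have "0 \<le> integral\<^sup>L lborel (\<lambda>t. c * indicator {\<alpha>..\<beta>} t :: real)" using assms(3) by (intro integral_nonneg_AE) auto
    ultimately show ?thesis by simp
  qed
  ultimately show ?thesis unfolding set_lebesgue_integral_def using assms(4) by simp
qed

lemma int_nonneg: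
  fixes f :: "real \<Rightarrow> real"
  assumes "\<And>t. 0 \<le> f t"
  shows "0 \<le> (LINT t:{0<..<l}|lborel. f t)"
  unfolding set_lebesgue_integral_def using assms by (intro integral_nonneg_AE) (auto simp: indicator_def)

lemma int_lower:
  fixes f :: "real \<Rightarrow> real"
  assumes meas: "f \<in> borel_measurable lborel"
    and b: "\<And>t. 0 \<le> f t" "\<And>t. f t \<le> 1"
    and one: "\<And>t. \<alpha> < t \<Longrightarrow> t < \<beta> \<Longrightarrow> f t = 1" and ab: "0 \<le> \<alpha>" "\<alpha> \<le> \<beta>" "\<beta> \<le> l"
  shows "\<beta> - \<alpha> \<le> (LINT t:{0<..<l}|lborel. f t)"
proof -
  have ig: "integrable lborel (\<lambda>t. indicator {0<..<l} t *\<^sub>R f t)"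
  proof (rule integrableI_bounded_set[where A="{0<..<l}" and B=1])
    show "AE x\<in>{0<..<l} in lborel. norm (indicator {0<..<l} x *\<^sub>R f x) \<le> 1" using b by (auto simp: indicator_def)
  qed (use meas ab in \<open>auto simp: emeasure_lborel_Ioo\<close>)
  have ig2: "integrable lborel (\<lambda>t. indicator {\<alpha><..<\<beta>} t :: real)"
    using ab by (intro integrable_real_indicator) (auto simp: emeasure_lborel_Ioo)
  have le: "indicator {\<alpha><..<\<beta>} t \<le> indicator {0<..<l} t *\<^sub>R f t" for t
    using one[of t] ab b(1)[of t] by (auto simp: indicator_def)
  have "integral\<^sup>L lborel (\<lambda>t. indicator {\<alpha><..<\<beta>} t :: real) = \<beta> - \<alpha>" using ab by simp
  moreover have "integral\<^sup>L lborel (\<lambda>t. indicator {\<alpha><..<\<beta>} t :: real) \<le> integral\<^sup>L lborel (\<lambda>t. indicator {0<..<l} t *\<^sub>R f t)"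
    using ig ig2 le by (intro integral_mono) auto
  ultimately show ?thesis unfolding set_lebesgue_integral_def by simp
qed

end

context net begin

lemma inc_finite: "finite (inc u)" unfolding inc_def using finE by simp

lemma vdeg_pos: assumes "u \<in> V" shows "vdeg E u \<ge> 1"
proof -
  obtain p q where pq: "(p, q) \<in> E" using Ene by auto
  have "p \<noteq> q" using Eirr pq by auto
  then obtain r where r: "r \<in> V" "r \<noteq> u" using endV[OF pq] by metis
  obtain ws where w: "is_walk E ws" "hd ws = u" "last ws = r" using conn[OF assms r(1)] by blast
  have l: "length ws \<ge> 2" using walk_len2 w r by auto
  have h0: "ws ! 0 = u" using w(2) l by (cases ws) auto
  have "adj E u (ws ! 1)" using walk_split(5)[OF w(1) l] h0 by simp
  then have "inc u \<noteq> {}" unfolding adj_def inc_def by force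
  then show ?thesis unfolding vdeg_inc using inc_finite by (simp add: Suc_leI card_gt_0_iff)
qed

lemma share_witness:
  assumes "z \<in> occupied n x" "pdist E lam y z < pdist E lam y (x i)"
  shows "share E lam n x i y = 0"
proof -
  have "x i \<notin> closest E lam n x y" using assms unfolding closest_def by force
  then show ?thesis by (rule share_notin)
qed

lemma dir_upper:
  assumes Oc: "occupied n x \<subseteq> points V E lam"
    and good: "\<forall>u. (u = fst e \<or> u = snd e) \<longrightarrow> Vtx u \<in> occupied n x \<or> vdeg E u = 1"
    and e: "e \<in> E" and c: "c = fst e \<or> c = snd e"
    and i: "i \<in> {1..n}" and w: "wpos e c (x i) \<sigma>0"
    and t: "0 < t" "t < lam e" "\<sigma>0 < coord e c t"
  shows "share E lam n x i (Mid e t) \<le> 1 / real (card {j \<in> {1..n}. x j = x i})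
           * indicator {\<sigma>0..\<sigma>0 + mm (occupied n x) e c \<sigma>0} (coord e c t)"
proof (cases "coord e c t - \<sigma>0 > mm (occupied n x) e c \<sigma>0")
  case True
  have fin: "finite (occupied n x)" unfolding occupied_def by simp
  have wi: "x i \<in> occupied n x" using i unfolding occupied_def by auto
  have cl: "coord e c t < lam e" using coord_range[OF t(1,2)] by auto
  obtain z where "z \<in> occupied n x" "pdist E lam (Mid e (coord e c (coord e c t))) z < pdist E lam (Mid e (coord e c (coord e c t))) (x i)"
    using Ulem[OF Oc fin good e c wi w cl True] by blast
  then have "share E lam n x i (Mid e t) = 0" using share_witness by simp
  then show ?thesis by simp
next
  case False
  then have "indicator {\<sigma>0..\<sigma>0 + mm (occupied n x) e c \<sigma>0} (coord e c t) = (1::real)" using t(3) by (simp add: indicator_def)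
  moreover have "share E lam n x i (Mid e t) \<le> 1 / real (card {j \<in> {1..n}. x j = x i})"
  proof (cases "x i \<in> closest E lam n x (Mid e t)")
    case True then show ?thesis using share_le[OF i] by blast
  next
    case False then show ?thesis using share_notin by simp
  qed
  ultimately show ?thesis by simp
qed

definition lo where "lo e c \<sigma>0 m = (if c = fst e then \<sigma>0 else lam e - \<sigma>0 - m)"

lemma ind_coord: "indicator {\<sigma>0..\<sigma>0 + m} (coord e c t) = (indicator {lo e c \<sigma>0 m .. lo e c \<sigma>0 m + m} t :: real)"
  unfolding lo_def coord_def indicator_def by auto

lemma dir_dev:
  assumes Oc: "occupied n x \<subseteq> points V E lam"
    and good: "\<forall>u. (u = fst e \<or> u = snd e) \<longrightarrow> Vtx u \<in> occupied n x \<or> vdeg E u = 1"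
    and e: "e \<in> E" and c: "c = fst e \<or> c = snd e"
    and i: "i \<in> {1..n}" and w: "wpos e c (x i) \<sigma>0"
    and d: "0 < \<delta>" "\<delta> < rho (occupied n x) e c \<sigma>0" "\<delta> / 2 < mm (occupied n x) e c \<sigma>0"
  shows "mm (occupied n x) e c \<sigma>0 - \<delta> / 2 \<le>
     (LINT t:{0<..<lam e}|lborel. share E lam n (x(i := Mid e (coord e c (\<sigma>0 + \<delta>)))) i (Mid e t))"
proof -
  let ?O = "occupied n x"
  let ?y = "Mid e (coord e c (\<sigma>0 + \<delta>))"
  let ?x' = "x(i := ?y)"
  let ?m = "mm ?O e c \<sigma>0"
  have fin: "finite ?O" unfolding occupied_def by simp
  have wi: "x i \<in> ?O" using i unfolding occupied_def by auto
  have r0: "0 \<le> \<sigma>0" "\<sigma>0 < lam e" using wpos_range[OF e w] by auto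
  note rm = rho_mm[OF fin r0(2), of c]
  have one: "share E lam n ?x' i (Mid e t) = 1" if s: "\<sigma>0 + \<delta> / 2 < coord e c t" "coord e c t < \<sigma>0 + ?m" for t
  proof -
    note D = Dvlem[OF Oc fin good e c wi w d(1,2) s]
    have occ': "occupied n ?x' \<subseteq> insert ?y ?O" unfolding occupied_def by auto
    have yin: "?y \<in> occupied n ?x'" using i unfolding occupied_def by auto
    have "closest E lam n ?x' (Mid e t) = {?y}"
    proof -
      have "z \<in> closest E lam n ?x' (Mid e t) \<Longrightarrow> z = ?y" for z
      proof (rule ccontr)
        assume z: "z \<in> closest E lam n ?x' (Mid e t)" "z \<noteq> ?y"
        then have "z \<in> ?O" using occ' unfolding closest_def by auto
        then have "pdist E lam (Mid e t) ?y < pdist E lam (Mid e t) z" using D(1) by simp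
        moreover have "pdist E lam (Mid e t) z \<le> pdist E lam (Mid e t) ?y" using z yin unfolding closest_def by auto
        ultimately show False by linarith
      qed
      moreover have "?y \<in> closest E lam n ?x' (Mid e t)"
      proof -
        have "pdist E lam (Mid e t) ?y \<le> pdist E lam (Mid e t) z'" if "z' \<in> occupied n ?x'" for z'
        proof (cases "z' = ?y")
          case False
          then have "z' \<in> ?O" using that occ' by auto
          then show ?thesis using D(1) by (simp add: less_imp_le)
        qed simp
        then show ?thesis using yin unfolding closest_def by auto
      qed
      ultimately show ?thesis by blast
    qed
    moreover have "\<forall>j\<in>{1..n}. j \<noteq> i \<longrightarrow> ?x' j \<noteq> ?x' i"
    proof (intro ballI impI)
      fix j assume j: "j \<in> {1..n}" "j \<noteq> i"
      then have "x j \<in> ?O" unfolding occupied_def by auto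
      then show "?x' j \<noteq> ?x' i" using D(2) j by auto
    qed
    ultimately show ?thesis using share_one[OF i] by simp
  qed
  define \<alpha> where "\<alpha> = (if c = fst e then \<sigma>0 + \<delta> / 2 else lam e - \<sigma>0 - ?m)"
  define \<beta> where "\<beta> = (if c = fst e then \<sigma>0 + ?m else lam e - \<sigma>0 - \<delta> / 2)"
  have ab: "\<beta> - \<alpha> = ?m - \<delta> / 2" unfolding \<alpha>_def \<beta>_def by auto
  have "\<beta> - \<alpha> \<le> (LINT t:{0<..<lam e}|lborel. share E lam n ?x' i (Mid e t))"
  proof (rule int_lower[OF share_meas share_nonneg share_le1[OF i]])
    fix t assume "\<alpha> < t" "t < \<beta>"
    then have "\<sigma>0 + \<delta> / 2 < coord e c t" "coord e c t < \<sigma>0 + ?m" unfolding \<alpha>_def \<beta>_def coord_def by (auto split: if_splits)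
    then show "share E lam n ?x' i (Mid e t) = 1" by (rule one)
  next
    show "0 \<le> \<alpha>" "\<alpha> \<le> \<beta>" "\<beta> \<le> lam e" unfolding \<alpha>_def \<beta>_def using rm r0 d by auto
  qed
  then show ?thesis using ab by simp
qed

end

context net begin

lemma edge_int_nonneg: "0 \<le> (LINT t:{0<..<lam e}|lborel. share E lam n x i (Mid e t))"
  by (rule int_nonneg) (rule share_nonneg)

lemma payoff_nonneg: "0 \<le> payoff E lam n x i"
  unfolding payoff_def by (intro sum_nonneg edge_int_nonneg)

lemma payoff_ge_edge: "e \<in> E \<Longrightarrow> (LINT t:{0<..<lam e}|lborel. share E lam n x i (Mid e t)) \<le> payoff E lam n x i"
  unfolding payoff_def by (rule member_le_sum) (auto intro: edge_int_nonneg finE)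

lemma nash_profile: "nash_eq V E lam n x \<Longrightarrow> occupied n x \<subseteq> points V E lam"
  unfolding nash_eq_def profile_def occupied_def by auto

lemma dev_contra:
  assumes nash: "nash_eq V E lam n x" and i: "i \<in> {1..n}"
    and e: "e \<in> E" and c: "c = fst e \<or> c = snd e" and w: "wpos e c (x i) \<sigma>0"
    and good: "\<forall>u. (u = fst e \<or> u = snd e) \<longrightarrow> Vtx u \<in> occupied n x \<or> vdeg E u = 1"
    and B: "payoff E lam n x i \<le> B" "B < mm (occupied n x) e c \<sigma>0"
  shows False
proof -
  let ?O = "occupied n x"
  let ?M = "mm ?O e c \<sigma>0"
  let ?r = "rho ?O e c \<sigma>0"
  have Oc: "?O \<subseteq> points V E lam" using nash_profile[OF nash] .
  have fin: "finite ?O" unfolding occupied_def by simp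
  have r0: "0 \<le> \<sigma>0" "\<sigma>0 < lam e" using wpos_range[OF e w] by auto
  note rm = rho_mm[OF fin r0(2), of c]
  have B0: "0 \<le> B" using payoff_nonneg B(1) by (rule order.trans)
  define \<delta> where "\<delta> = min (?r / 2) (?M - B)"
  have d: "0 < \<delta>" "\<delta> < ?r" "\<delta> / 2 < ?M" "\<delta> \<le> ?M - B" unfolding \<delta>_def using rm B B0 by auto
  let ?y = "Mid e (coord e c (\<sigma>0 + \<delta>))"
  have yp: "?y \<in> points V E lam" using Mid_points[OF e, of "\<sigma>0 + \<delta>" c] d r0 rm by auto
  have "payoff E lam n (x(i := ?y)) i \<le> payoff E lam n x i" using nash yp i unfolding nash_eq_def by blast
  moreover have "?M - \<delta> / 2 \<le> payoff E lam n (x(i := ?y)) i"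
    using dir_dev[OF Oc good e c i w d(1,2,3)] payoff_ge_edge[OF e, of n "x(i := ?y)" i] by linarith
  ultimately show False using B d by linarith
qed

lemma offedge_int:
  assumes Oc: "occupied n x \<subseteq> points V E lam"
    and good: "\<forall>u. (u = fst e \<or> u = snd e) \<longrightarrow> Vtx u \<in> occupied n x \<or> vdeg E u = 1"
    and e: "e \<in> E" and i: "i \<in> {1..n}"
    and w: "x i \<noteq> Vtx (fst e)" "x i \<noteq> Vtx (snd e)" "\<forall>t. x i \<noteq> Mid e t"
  shows "(LINT t:{0<..<lam e}|lborel. share E lam n x i (Mid e t)) \<le> 0"
proof -
  have wi: "x i \<in> occupied n x" using i unfolding occupied_def by auto
  have "(LINT t:{0<..<lam e}|lborel. share E lam n x i (Mid e t)) \<le> 0 * (0 - 0)"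
  proof (rule int_upper)
    fix t assume t: "0 < t" "t < lam e"
    obtain z where "z \<in> occupied n x" "pdist E lam (Mid e (coord e (fst e) t)) z < pdist E lam (Mid e (coord e (fst e) t)) (x i)"
      using offedge[OF Oc good e wi w t] by blast
    moreover have "coord e (fst e) t = t" unfolding coord_def by simp
    ultimately have "share E lam n x i (Mid e t) = 0" using share_witness by simp
    then show "share E lam n x i (Mid e t) \<le> 0 * indicator {0..0} t" by simp
  qed (auto intro: share_nonneg)
  then show ?thesis by simp
qed

lemma dir_int:
  assumes Oc: "occupied n x \<subseteq> points V E lam"
    and good: "\<forall>u. (u = fst e \<or> u = snd e) \<longrightarrow> Vtx u \<in> occupied n x \<or> vdeg E u = 1"
    and e: "e \<in> E" and c: "c = fst e \<or> c = snd e"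
    and i: "i \<in> {1..n}" and w: "wpos e c (x i) 0"
  shows "(LINT t:{0<..<lam e}|lborel. share E lam n x i (Mid e t))
      \<le> 1 / real (card {j \<in> {1..n}. x j = x i}) * mm (occupied n x) e c 0"
proof -
  let ?m = "mm (occupied n x) e c 0"
  have fin: "finite (occupied n x)" unfolding occupied_def by simp
  have m0: "0 < ?m" using rho_mm(1)[OF fin] wpos_range[OF e w] by auto
  have "(LINT t:{0<..<lam e}|lborel. share E lam n x i (Mid e t))
      \<le> 1 / real (card {j \<in> {1..n}. x j = x i}) * (lo e c 0 ?m + ?m - lo e c 0 ?m)"
  proof (rule int_upper)
    fix t assume t: "0 < t" "t < lam e"
    have "0 < coord e c t" using coord_range[OF t] by auto
    then show "share E lam n x i (Mid e t) \<le> 1 / real (card {j \<in> {1..n}. x j = x i}) * indicator {lo e c 0 ?m .. lo e c 0 ?m + ?m} t"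
      using dir_upper[OF Oc good e c i w t] ind_coord[of 0 ?m e c t] by simp
  qed (use m0 in \<open>auto intro: share_nonneg\<close>)
  then show ?thesis by simp
qed

end

context net begin

lemma good_of:
  assumes deg2: "\<forall>v\<in>V. vdeg E v \<noteq> 2" and vp: "vertex_property V E n x" and e: "e \<in> E"
  shows "\<forall>u. (u = fst e \<or> u = snd e) \<longrightarrow> Vtx u \<in> occupied n x \<or> vdeg E u = 1"
proof (intro allI impI)
  fix u assume u: "u = fst e \<or> u = snd e"
  have uV: "u \<in> V" using endp[OF e u] .
  have "vdeg E u \<ge> 1" using vdeg_pos[OF uV] .
  moreover have "vdeg E u \<noteq> 2" using deg2 uV by auto
  moreover have "vdeg E u \<ge> 3 \<Longrightarrow> Vtx u \<in> occupied n x"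
    using vp uV unfolding vertex_property_def occupied_def by (metis image_eqI)
  ultimately show "Vtx u \<in> occupied n x \<or> vdeg E u = 1" by linarith
qed

lemma main_contra:
  assumes deg2: "\<forall>v\<in>V. vdeg E v \<noteq> 2" and nash: "nash_eq V E lam n x"
    and vp: "vertex_property V E n x" and wp: "w \<in> points V E lam"
    and big: "card {i \<in> {1..n}. x i = w} > pdeg E w"
  shows False
proof -
  let ?O = "occupied n x"
  have Oc: "?O \<subseteq> points V E lam" using nash_profile[OF nash] .
  have fin: "finite ?O" unfolding occupied_def by simp
  have goodE: "\<And>e. e \<in> E \<Longrightarrow> \<forall>u. (u = fst e \<or> u = snd e) \<longrightarrow> Vtx u \<in> ?O \<or> vdeg E u = 1"
    using good_of[OF deg2 vp] by blast
  define K where "K = card {i \<in> {1..n}. x i = w}"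
  have K0: "K > 0" using big unfolding K_def by linarith
  then obtain i where i: "i \<in> {1..n}" "x i = w" unfolding K_def by (metis (mono_tags, lifting) card_gt_0_iff empty_Collect_eq)
  have Ki: "card {j \<in> {1..n}. x j = x i} = K" unfolding K_def i(2) ..
  define k where "k = real K"
  have k0: "k > 0" unfolding k_def using K0 by simp
  show False using wp
  proof (cases rule: points_cases)
    case (1 v)
    let ?mA = "\<lambda>e. mm ?O e v 0"
    have d: "card (inc v) < K" using big 1 unfolding K_def by (simp add: vdeg_inc)
    have incE: "inc v \<subseteq> E" unfolding inc_def by auto
    have ine: "inc v \<noteq> {}" using vdeg_pos[OF 1(2)] unfolding vdeg_inc by auto
    have bound: "(LINT t:{0<..<lam e}|lborel. share E lam n x i (Mid e t)) \<le> (if e \<in> inc v then 1 / k * ?mA e else 0)"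
      if e: "e \<in> E" for e
    proof (cases "e \<in> inc v")
      case True
      then have c: "v = fst e \<or> v = snd e" unfolding inc_def by auto
      have w: "wpos e v (x i) 0" unfolding wpos_def using i 1 by simp
      show ?thesis using dir_int[OF Oc goodE[OF e] e c i(1) w] True Ki unfolding k_def by simp
    next
      case False
      then have "x i \<noteq> Vtx (fst e)" "x i \<noteq> Vtx (snd e)" "\<forall>t. x i \<noteq> Mid e t" using i 1 e unfolding inc_def by auto
      then show ?thesis using offedge_int[OF Oc goodE[OF e] e i(1)] False by simp
    qed
    define M where "M = Max (?mA ` inc v)"
    have Mge: "\<And>e. e \<in> inc v \<Longrightarrow> ?mA e \<le> M" unfolding M_def using inc_finite by simp
    have "M \<in> ?mA ` inc v" unfolding M_def using Max_in[of "?mA ` inc v"] inc_finite[of v] ine by blast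
    then obtain es where es: "es \<in> inc v" "?mA es = M" by auto
    have esE: "es \<in> E" and cs: "v = fst es \<or> v = snd es" using es(1) unfolding inc_def by auto
    have ws: "wpos es v (x i) 0" unfolding wpos_def using i 1 by simp
    have l0: "0 < lam es" using lampos esE by auto
    have M0: "0 < M" using rho_mm(1)[OF fin l0, of v] es(2) by simp
    have "payoff E lam n x i \<le> (\<Sum>e\<in>E. if e \<in> inc v then 1 / k * ?mA e else 0)"
      unfolding payoff_def by (rule sum_mono) (rule bound)
    also have "\<dots> = (\<Sum>e\<in>inc v. 1 / k * ?mA e)"
      using incE finE by (simp add: sum.inter_restrict[symmetric] Int_absorb1)
    also have "\<dots> \<le> (\<Sum>e\<in>inc v. 1 / k * M)"
      using Mge k0 by (intro sum_mono mult_left_mono) auto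
    also have "\<dots> = real (card (inc v)) / k * M" by simp
    finally have P: "payoff E lam n x i \<le> real (card (inc v)) / k * M" .
    have "real (card (inc v)) / k < 1" using d k0 unfolding k_def by simp
    then have "real (card (inc v)) / k * M < M" using mult_strict_right_mono[OF _ M0] by fastforce
    then show False using dev_contra[OF nash i(1) esE cs ws goodE[OF esE] P] es(2) by simp
  next
    case (2 a b t0)
    define e0 where "e0 = (a, b)"
    have e0: "e0 \<in> E" using 2 unfolding e0_def by simp
    have ab: "a \<noteq> b" using Eirr 2 by auto
    have t0: "0 < t0" "t0 < lam e0" using 2 unfolding e0_def by auto
    have ca: "a = fst e0 \<or> a = snd e0" and cb: "b = fst e0 \<or> b = snd e0" unfolding e0_def by auto
    have coa: "coord e0 a s = s" for s unfolding coord_def e0_def by simp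
    have cob: "coord e0 b s = lam e0 - s" for s unfolding coord_def e0_def using ab by simp
    have w1: "wpos e0 a (x i) t0" unfolding wpos_def coa using i 2 t0 e0_def by simp
    have w2: "wpos e0 b (x i) (lam e0 - t0)" unfolding wpos_def cob using i 2 t0 e0_def by simp
    define m1 where "m1 = mm ?O e0 a t0"
    define m2 where "m2 = mm ?O e0 b (lam e0 - t0)"
    have m1: "0 < m1" unfolding m1_def using rho_mm(1)[OF fin] t0 by auto
    have m2: "0 < m2" unfolding m2_def using rho_mm(1)[OF fin] t0 by auto
    have K3: "K > 2" using big 2 unfolding K_def by simp
    have bound: "(LINT t:{0<..<lam e}|lborel. share E lam n x i (Mid e t)) \<le> (if e = e0 then 1 / k * (m1 + m2) else 0)"
      if e: "e \<in> E" for e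
    proof (cases "e = e0")
      case True
      have "(LINT t:{0<..<lam e0}|lborel. share E lam n x i (Mid e0 t)) \<le> 1 / k * ((t0 + m1) - (t0 - m2))"
      proof (rule int_upper)
        fix t assume t: "0 < t" "t < lam e0"
        show "share E lam n x i (Mid e0 t) \<le> 1 / k * indicator {t0 - m2..t0 + m1} t"
        proof (cases "t0 < t")
          case True
          have "share E lam n x i (Mid e0 t) \<le> 1 / k * indicator {t0..t0 + m1} t"
            using dir_upper[OF Oc goodE[OF e0] e0 ca i(1) w1 t] True Ki unfolding coa m1_def k_def by simp
          moreover have "indicator {t0..t0 + m1} t \<le> (indicator {t0 - m2..t0 + m1} t :: real)"
            using m2 by (auto simp: indicator_def)
          ultimately show ?thesis using k0 by (smt (verit) mult_left_mono divide_nonneg_nonneg)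
        next
          case False
          show ?thesis
          proof (cases "t < t0")
            case True
            have "share E lam n x i (Mid e0 t) \<le> 1 / k * indicator {lam e0 - t0..lam e0 - t0 + m2} (lam e0 - t)"
              using dir_upper[OF Oc goodE[OF e0] e0 cb i(1) w2 t] True Ki unfolding cob m2_def k_def by simp
            moreover have "indicator {lam e0 - t0..lam e0 - t0 + m2} (lam e0 - t) \<le> (indicator {t0 - m2..t0 + m1} t :: real)"
              using m1 by (auto simp: indicator_def)
            ultimately show ?thesis using k0 by (smt (verit) mult_left_mono divide_nonneg_nonneg)
          next
            case False
            then have tt: "t = t0" using \<open>\<not> t0 < t\<close> by simp
            have "share E lam n x i (Mid e0 t) \<le> 1 / k"
            proof (cases "x i \<in> closest E lam n x (Mid e0 t)")
              case True then show ?thesis using share_le[OF i(1) True] Ki unfolding k_def by simp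
            next
              case False then show ?thesis using share_notin k0 by simp
            qed
            then show ?thesis using tt m1 m2 by (simp add: indicator_def)
          qed
        qed
      qed (use m1 m2 k0 in \<open>auto intro: share_nonneg\<close>)
      then show ?thesis using True by simp
    next
      case False
      have "x i \<noteq> Vtx (fst e)" "x i \<noteq> Vtx (snd e)" "\<forall>t. x i \<noteq> Mid e t" using i 2 False unfolding e0_def by auto
      then show ?thesis using offedge_int[OF Oc goodE[OF e] e i(1)] False by simp
    qed
    have "payoff E lam n x i \<le> (\<Sum>e\<in>E. if e = e0 then 1 / k * (m1 + m2) else 0)"
      unfolding payoff_def by (rule sum_mono) (rule bound)
    also have "\<dots> = 1 / k * (m1 + m2)" using e0 finE by simp
    finally have P: "payoff E lam n x i \<le> 1 / k * (m1 + m2)" .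
    have k3: "k > 2" using K3 unfolding k_def by simp
    show False
    proof (cases "m2 \<le> m1")
      case True
      have "2 * m1 < k * m1" using mult_strict_right_mono[OF k3 m1] .
      then have "m1 + m2 < k * m1" using True by linarith
      then have "(m1 + m2) / k < m1" using k3 by (simp add: pos_divide_less_eq mult.commute)
      then have "1 / k * (m1 + m2) < m1" by simp
      then show False using dev_contra[OF nash i(1) e0 ca w1 goodE[OF e0] P] unfolding m1_def by simp
    next
      case False
      have "2 * m2 < k * m2" using mult_strict_right_mono[OF k3 m2] .
      then have "m1 + m2 < k * m2" using False by linarith
      then have "(m1 + m2) / k < m2" using k3 by (simp add: pos_divide_less_eq mult.commute)
      then have "1 / k * (m1 + m2) < m2" by simp
      then show False using dev_contra[OF nash i(1) e0 cb w2 goodE[OF e0] P] unfolding m2_def by simp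
    qed
  qed
qed

end

theorem mainTheorem6:
  fixes V :: "'v set" and E :: "('v \<times> 'v) set" and lam :: "'v \<times> 'v \<Rightarrow> real"
    and n :: nat and x :: "nat \<Rightarrow> 'v pt"
  assumes "network V E lam"
    and "\<forall>v\<in>V. vdeg E v \<noteq> 2"
    and "nash_eq V E lam n x"
    and "vertex_property V E n x"
    and "w \<in> points V E lam"
  shows "card {i \<in> {1..n}. x i = w} \<le> pdeg E w"
proof (rule ccontr)
  assume "\<not> card {i \<in> {1..n}. x i = w} \<le> pdeg E w"
  then have big: "card {i \<in> {1..n}. x i = w} > pdeg E w" by simp
  interpret net V E lam by unfold_locales (rule assms(1))
  show False using main_contra[OF assms(2-5) big] .
qed

end
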